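(* Let $X$ and $Y$ be spaces. If $X$ is strongly $Y$-selective, then every subspace of $X$ is strongly $Y$-selective; if $X$ is $Y$-selective, then every closed subspace of $X$ is $Y$-selective.
   Context: All spaces are assumed $T_1$. For spaces $Y$, $X$, a map $\varphi:Y\to\mathcal P(X)\setminus\{\emptyset\}$ is lower semicontinuous (l.s.c.) if $\{y:\varphi(y)\cap U\neq\emptyset\}$ is open in $Y$ for every open $U\subseteq X$; a selection is a map $f:Y\to X$ with $f(y)\in\varphi(y)$ for all $y$. $X$ is strongly $Y$-selective if every l.s.c. map $Y\to\mathcal P(X)\setminus\{\emptyset\}$ has a continuous selection, and $Y$-selective if every l.s.c. map from $Y$ to the nonempty closed subsets of $X$ has a continuous selection. *)

theory Defs
  imports "HOL-Analysis.Analysis"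
begin

definition lsc_map :: "'b topology \<Rightarrow> 'a topology \<Rightarrow> ('b \<Rightarrow> 'a set) \<Rightarrow> bool" where
  "lsc_map Y X \<phi> \<longleftrightarrow>
     (\<forall>y\<in>topspace Y. \<phi> y \<subseteq> topspace X \<and> \<phi> y \<noteq> {}) \<and>
     (\<forall>U. openin X U \<longrightarrow> openin Y {y \<in> topspace Y. \<phi> y \<inter> U \<noteq> {}})"

definition has_continuous_selection :: "'b topology \<Rightarrow> 'a topology \<Rightarrow> ('b \<Rightarrow> 'a set) \<Rightarrow> bool" where
  "has_continuous_selection Y X \<phi> \<longleftrightarrow>
     (\<exists>f. continuous_map Y X f \<and> (\<forall>y\<in>topspace Y. f y \<in> \<phi> y))"

definition strongly_selective :: "'a topology \<Rightarrow> 'b topology \<Rightarrow> bool" where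
  "strongly_selective X Y \<longleftrightarrow>
     (\<forall>\<phi>. lsc_map Y X \<phi> \<longrightarrow> has_continuous_selection Y X \<phi>)"

definition selective :: "'a topology \<Rightarrow> 'b topology \<Rightarrow> bool" where
  "selective X Y \<longleftrightarrow>
     (\<forall>\<phi>. lsc_map Y X \<phi> \<and> (\<forall>y\<in>topspace Y. closedin X (\<phi> y))
          \<longrightarrow> has_continuous_selection Y X \<phi>)"

end

theory Submission
  imports Defs
begin

lemma lsc_sub:
  assumes "lsc_map Y (subtopology X Z) \<phi>" "Z \<subseteq> topspace X"
  shows "lsc_map Y X \<phi>"
  unfolding lsc_map_def
proof (intro conjI allI impI ballI)
  fix y assume "y \<in> topspace Y"
  then show "\<phi> y \<subseteq> topspace X" "\<phi> y \<noteq> {}"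
    using assms unfolding lsc_map_def by (auto simp: topspace_subtopology)
next
  fix U assume U: "openin X U"
  have o: "openin (subtopology X Z) (U \<inter> Z)"
    using U by (auto simp: openin_subtopology)
  have "{y \<in> topspace Y. \<phi> y \<inter> U \<noteq> {}} = {y \<in> topspace Y. \<phi> y \<inter> (U \<inter> Z) \<noteq> {}}"
    using assms(1) unfolding lsc_map_def by (auto simp: topspace_subtopology) blast
  then show "openin Y {y \<in> topspace Y. \<phi> y \<inter> U \<noteq> {}}"
    using assms(1) o unfolding lsc_map_def by simp
qed

lemma sel_sub:
  assumes "lsc_map Y (subtopology X Z) \<phi>" "has_continuous_selection Y X \<phi>"
  shows "has_continuous_selection Y (subtopology X Z) \<phi>"
proof -
  obtain f where f: "continuous_map Y X f" "\<forall>y\<in>topspace Y. f y \<in> \<phi> y"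
    using assms(2) unfolding has_continuous_selection_def by blast
  have "f ` topspace Y \<subseteq> Z"
    using f(2) assms(1) unfolding lsc_map_def by (auto simp: topspace_subtopology)
  then show ?thesis unfolding has_continuous_selection_def
    using f by (auto simp: continuous_map_in_subtopology)
qed

theorem mainTheorem8:
  fixes X :: "'a topology" and Y :: "'b topology" and Z :: "'a set"
  assumes "t1_space X" and "t1_space Y" and "Z \<subseteq> topspace X"
  shows "(strongly_selective X Y \<longrightarrow> strongly_selective (subtopology X Z) Y) \<and>
         (selective X Y \<and> closedin X Z \<longrightarrow> selective (subtopology X Z) Y)"
proof (intro conjI impI)
  assume "strongly_selective X Y"
  then show "strongly_selective (subtopology X Z) Y"
    unfolding strongly_selective_def using lsc_sub sel_sub assms(3) by blast
next
  assume a: "selective X Y \<and> closedin X Z"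
  show "selective (subtopology X Z) Y"
    unfolding selective_def
  proof (intro allI impI)
    fix \<phi> assume h: "lsc_map Y (subtopology X Z) \<phi> \<and> (\<forall>y\<in>topspace Y. closedin (subtopology X Z) (\<phi> y))"
    have "\<forall>y\<in>topspace Y. closedin X (\<phi> y)"
      using h a closedin_trans_full by blast
    then show "has_continuous_selection Y (subtopology X Z) \<phi>"
      using a h lsc_sub[of Y X Z \<phi>] sel_sub assms(3) unfolding selective_def by blast
  qed
qed

end
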